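(* Let $r\ge2$, $a_1,\dots,a_r\in\mathbb{N}$ and $n_1,\dots,n_r\ge1$. In the sampling without replacement Pólya–Eggenberger urn with $r$ types of balls and ball transition matrix $\mathrm{diag}(-a_1,\dots,-a_r)$, started with $a_jn_j$ balls of type $j$, let $\mathbf{Y}_{\mathbf{an}}=(Y^{[1]}_{\mathbf{an}},\dots,Y^{[r-1]}_{\mathbf{an}})$ count the numbers of balls of types $1,\dots,r-1$ when the process stops. Then for $0\le k_j\le n_j$, \[ \mathbb{P}\{\mathbf{Y}_{\mathbf{an}}=(a_1k_1,\dots,a_{r-1}k_{r-1})\}=\sum_{\ell_1=k_1}^{n_1}\cdots\sum_{\ell_{r-1}=k_{r-1}}^{n_{r-1}}\frac{\prod_{j=1}^{r-1}\binom{n_j}{\ell_j}\binom{\ell_j}{k_j}(-1)^{\ell_j-k_j}}{\binom{n_r+\sum_{f=1}^{r-1}\frac{a_f\ell_f}{a_r}}{n_r}}, \] and for all integers $s_1,\dots,s_{r-1}\ge0$, \[ \mathbb{E}\Big(\prod_{j=1}^{r-1}\Big(\frac{Y^{[j]}_{\mathbf{an}}}{a_j}\Big)^{\underline{s_j}}\Big)=\frac{\prod_{j=1}^{r-1}n_j^{\underline{s_j}}}{\binom{n_r+\sum_{f=1}^{r-1}\frac{a_fs_f}{a_r}}{n_r}}. \]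
   Context: The urn: at each step a ball is drawn uniformly at random among all balls present; if it is of type $j$, the number of type $j$ balls decreases by $a_j$. The process stops when either all type $r$ balls have been removed or all balls of types $1,\dots,r-1$ have been removed; $Y^{[j]}_{\mathbf{an}}$ is the number of type $j$ balls at that time. For real $x$ and integer $k\ge0$, $x^{\underline{k}}=x(x-1)\cdots(x-k+1)$ and $\binom{x}{k}=x^{\underline{k}}/k!$. *)

theory Defs
  imports "HOL-Probability.Probability"
begin

definition falling_fact :: "real \<Rightarrow> nat \<Rightarrow> real" where
  "falling_fact x k = (\<Prod>i<k. x - real i)"

text \<open>Ball configuration: c j = number of type-j balls, types 1..r.
  The multiset of all balls present (one element j per ball of type j).\<close>
definition urn_balls :: "nat \<Rightarrow> (nat \<Rightarrow> nat) \<Rightarrow> nat multiset" where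
  "urn_balls r c = (\<Sum>j\<in>{1..r}. replicate_mset (c j) j)"

definition urn_stopped :: "nat \<Rightarrow> (nat \<Rightarrow> nat) \<Rightarrow> bool" where
  "urn_stopped r c \<longleftrightarrow> c r = 0 \<or> (\<forall>j\<in>{1..<r}. c j = 0)"

primrec urn_run :: "nat \<Rightarrow> nat \<Rightarrow> (nat \<Rightarrow> nat) \<Rightarrow> (nat \<Rightarrow> nat) \<Rightarrow> (nat \<Rightarrow> nat) pmf" where
  "urn_run 0 r a c = return_pmf c"
| "urn_run (Suc m) r a c =
     (if urn_stopped r c then return_pmf c
      else bind_pmf (pmf_of_multiset (urn_balls r c))
             (\<lambda>j. urn_run m r a (c(j := c j - a j))))"

text \<open>Each step removes at least one ball (a j \<ge> 1),
  so the total number of balls is a sufficient number of steps.\<close>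
definition urn_final :: "nat \<Rightarrow> (nat \<Rightarrow> nat) \<Rightarrow> (nat \<Rightarrow> nat) \<Rightarrow> (nat \<Rightarrow> nat) pmf" where
  "urn_final r a n = urn_run (\<Sum>j\<in>{1..r}. a j * n j) r a (\<lambda>j. a j * n j)"

end

theory Submission
  imports Defs
begin

lemma ff_Suc: "falling_fact x (Suc s) = falling_fact x s * (x - real s)"
  by (simp add: falling_fact_def)

lemma ff_Suc2: "falling_fact x (Suc s) = x * falling_fact (x - 1) s"
  unfolding falling_fact_def prod.lessThan_Suc_shift by (simp add: algebra_simps)

lemma ff_shift: "real m * falling_fact (real (m - 1)) s = (real m - real s) * falling_fact (real m) s"
proof (cases m)
  case 0
  then show ?thesis by (cases s) (auto simp: falling_fact_def prod.lessThan_Suc_shift)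
next
  case (Suc k)
  then show ?thesis using ff_Suc[of "real m" s] ff_Suc2[of "real m" s] by (simp add: algebra_simps)
qed

lemma choose_ff: "real (n choose l) = falling_fact (real n) l / fact l"
  by (simp add: binomial_gbinomial gbinomial_prod_rev falling_fact_def atLeast0LessThan)

lemma gchoose_pos: "x \<ge> real k \<Longrightarrow> (x gchoose k) > 0"
  unfolding gbinomial_prod_rev
  by (intro divide_pos_pos prod_pos) auto

lemma count_urn_balls: "count (urn_balls r c) j = (if j \<in> {1..r} then c j else 0)"
  unfolding urn_balls_def count_sum by (simp add: sum.delta)

lemma size_urn_balls: "size (urn_balls r c) = (\<Sum>j\<in>{1..r}. c j)"
proof -
  have "\<And>A. finite A \<Longrightarrow> size (\<Sum>j\<in>A. replicate_mset (c j) j) = (\<Sum>j\<in>A. c j)"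
    subgoal for A by (induction A rule: finite_induct) auto done
  then show ?thesis unfolding urn_balls_def by simp
qed

lemma set_urn_balls: "set_mset (urn_balls r c) \<subseteq> {1..r}"
proof
  fix x assume "x \<in># urn_balls r c"
  hence "count (urn_balls r c) x \<noteq> 0" by simp
  thus "x \<in> {1..r}" by (simp add: count_urn_balls split: if_splits)
qed

lemma urn_balls_ne: "r \<ge> 1 \<Longrightarrow> c r > 0 \<Longrightarrow> urn_balls r c \<noteq> {#}"
  using count_urn_balls[of r c r] by (cases r) auto

lemma not_stopped_pos: "\<not> urn_stopped r c \<Longrightarrow> c r > 0"
  by (auto simp: urn_stopped_def)

lemma urn_run_finite: "r \<ge> 1 \<Longrightarrow> finite (set_pmf (urn_run k r a c))"
proof (induction k arbitrary: c)
  case 0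
  then show ?case by simp
next
  case (Suc k)
  show ?case
  proof (cases "urn_stopped r c")
    case False
    have ne: "urn_balls r c \<noteq> {#}" using urn_balls_ne[of r c, OF Suc.prems not_stopped_pos[OF False]] .
    show ?thesis using False Suc ne by simp
  qed simp
qed

lemma urn_run_support:
  "\<forall>j\<in>{1..r}. c j = a j * m j \<Longrightarrow> c' \<in> set_pmf (urn_run k r a c) \<Longrightarrow> r \<ge> 1
   \<Longrightarrow> \<forall>j\<in>{1..r}. \<exists>y\<le>m j. c' j = a j * y"
proof (induction k arbitrary: c m)
  case 0
  then show ?case by auto
next
  case (Suc k)
  show ?case
  proof (cases "urn_stopped r c")
    case True
    then show ?thesis using Suc.prems by auto
  next
    case False
    have ne: "urn_balls r c \<noteq> {#}" using urn_balls_ne[of r c, OF Suc.prems(3) not_stopped_pos[OF False]] .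
    from Suc.prems(2) False ne obtain j where j: "j \<in># urn_balls r c"
      and c': "c' \<in> set_pmf (urn_run k r a (c(j := c j - a j)))" by auto
    have jr: "j \<in> {1..r}" using j set_urn_balls by blast
    have "\<forall>i\<in>{1..r}. (c(j := c j - a j)) i = a i * (m(j := m j - 1)) i"
      using Suc.prems(1) jr by (auto simp: diff_mult_distrib2)
    from Suc.IH[OF this c' Suc.prems(3)] show ?thesis
      by (metis (no_types, lifting) diff_le_self fun_upd_apply le_trans)
  qed
qed

lemma alt_sum:
  assumes "y \<le> N" "k \<le> N"
  shows "(if y = k then 1 else 0) = (\<Sum>l\<in>{k..N}. (-1) ^ (l - k) * real (l choose k) * real (y choose l))"
proof (cases "y < k")
  case True
  then show ?thesis by (auto intro!: sum.neutral simp: binomial_eq_0)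
next
  case False
  have "(\<Sum>l\<in>{k..N}. (-1) ^ (l - k) * real (l choose k) * real (y choose l))
      = (\<Sum>l\<in>{k..y}. (-1) ^ (l - k) * real (l choose k) * real (y choose l))"
    using assms False by (intro sum.mono_neutral_right) (auto simp: binomial_eq_0)
  also have "\<dots> = (\<Sum>l\<in>{k..y}. real (y choose k) * ((-1) ^ (l - k) * real ((y - k) choose (l - k))))"
  proof (intro sum.cong refl)
    fix l assume "l \<in> {k..y}"
    then have "(y choose l) * (l choose k) = (y choose k) * ((y - k) choose (l - k))"
      by (intro choose_mult) auto
    then have "real (y choose l) * real (l choose k) = real (y choose k) * real ((y - k) choose (l - k))"
      by (metis of_nat_mult)
    then show "(-1) ^ (l - k) * real (l choose k) * real (y choose l) = real (y choose k) * ((-1) ^ (l - k) * real ((y - k) choose (l - k)))"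
      by (simp add: algebra_simps)
  qed
  also have "\<dots> = real (y choose k) * (\<Sum>l\<in>{k..y}. (-1) ^ (l - k) * real ((y - k) choose (l - k)))"
    by (simp add: sum_distrib_left)
  also have alt: "(\<Sum>l\<in>{k..y}. (-1) ^ (l - k) * real ((y - k) choose (l - k))) = (\<Sum>i\<le>y - k. (-1) ^ i * real ((y - k) choose i))"
  proof -
    have "(\<Sum>l\<in>{k..y}. (-1) ^ (l - k) * real ((y - k) choose (l - k))) = (\<Sum>i\<in>{0..y-k}. (-1) ^ i * real ((y - k) choose i))"
      using False by (intro sum.reindex_bij_witness[of _ "\<lambda>i. i + k" "\<lambda>l. l - k"]) auto
    then show ?thesis by (simp add: atLeast0AtMost)
  qed
  finally have eq: "(\<Sum>l\<in>{k..N}. (-1) ^ (l - k) * real (l choose k) * real (y choose l)) = real (y choose k) * (\<Sum>i\<le>y - k. (-1) ^ i * real ((y - k) choose i))" .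
  show ?thesis
  proof (cases "y = k")
    case False': False
    with False have "y - k > 0" by simp
    from choose_alternating_sum[OF this, where 'a=real] False' eq show ?thesis by simp
  next
    case True
    then show ?thesis using eq by simp
  qed
qed

lemma stopped_val:
  fixes r :: nat and a c m s :: "nat \<Rightarrow> nat"
  assumes apos: "\<forall>j\<in>{1..r}. a j \<ge> 1" and cm: "\<forall>j\<in>{1..r}. c j = a j * m j"
    and st: "m r = 0 \<or> (\<forall>j\<in>{1..<r}. m j = 0)"
  shows "(\<Prod>j\<in>{1..<r}. falling_fact (real (c j) / real (a j)) (s j))
   = (\<Prod>j\<in>{1..<r}. falling_fact (real (m j)) (s j)) / ((real (m r) + (\<Sum>f\<in>{1..<r}. real (a f) * real (s f) / real (a r))) gchoose m r)"
proof -
  have "(\<Prod>j\<in>{1..<r}. falling_fact (real (c j) / real (a j)) (s j)) = (\<Prod>j\<in>{1..<r}. falling_fact (real (m j)) (s j))"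
  proof (intro prod.cong refl)
    fix j assume "j \<in> {1..<r}"
    then have jr: "j \<in> {1..r}" by auto
    have "a j \<ge> 1" "c j = a j * m j" using bspec[OF apos jr] bspec[OF cm jr] by auto
    then show "falling_fact (real (c j) / real (a j)) (s j) = falling_fact (real (m j)) (s j)" by simp
  qed
  moreover have "(\<Prod>j\<in>{1..<r}. falling_fact (real (m j)) (s j)) = (\<Prod>j\<in>{1..<r}. falling_fact (real (m j)) (s j)) / ((real (m r) + (\<Sum>f\<in>{1..<r}. real (a f) * real (s f) / real (a r))) gchoose m r)"
  proof (cases "m r = 0")
    case True then show ?thesis by simp
  next
    case False
    with st have m0: "\<forall>j\<in>{1..<r}. m j = 0" by auto
    show ?thesis
    proof (cases "\<exists>j\<in>{1..<r}. s j > 0")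
      case True
      then obtain j where "j \<in> {1..<r}" "s j > 0" by auto
      then have "falling_fact (real (m j)) (s j) = 0" using m0
        by (cases "s j") (auto simp: falling_fact_def prod.lessThan_Suc_shift)
      then have z: "(\<Prod>j\<in>{1..<r}. falling_fact (real (m j)) (s j)) = 0"
        using \<open>j \<in> {1..<r}\<close> by (metis finite_atLeastLessThan prod_zero)
      show ?thesis unfolding z by simp
    next
      case False
      then have "\<forall>j\<in>{1..<r}. s j = 0" by auto
      then have "(\<Sum>f\<in>{1..<r}. real (a f) * real (s f) / real (a r)) = 0" by simp
      moreover have "(real (m r) gchoose m r) = 1"
        using binomial_gbinomial[of "m r" "m r", where 'a=real] by simp
      ultimately show ?thesis by simp
    qed
  qed
  ultimately show ?thesis by simp
qed

definition PP :: "nat \<Rightarrow> (nat \<Rightarrow> nat) \<Rightarrow> (nat \<Rightarrow> nat) \<Rightarrow> (nat \<Rightarrow> nat) \<Rightarrow> real" where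
  "PP r a s c = (\<Prod>j\<in>{1..<r}. falling_fact (real (c j) / real (a j)) (s j))"

definition GG :: "nat \<Rightarrow> (nat \<Rightarrow> nat) \<Rightarrow> (nat \<Rightarrow> nat) \<Rightarrow> (nat \<Rightarrow> nat) \<Rightarrow> real" where
  "GG r a s m = (\<Prod>j\<in>{1..<r}. falling_fact (real (m j)) (s j)) / ((real (m r) + (\<Sum>f\<in>{1..<r}. real (a f) * real (s f) / real (a r))) gchoose m r)"

lemma alg:
  fixes r :: nat and a m s :: "nat \<Rightarrow> nat"
  assumes r1: "r \<ge> 1" and apos: "\<forall>j\<in>{1..r}. a j \<ge> 1" and mr: "m r \<ge> 1"
  defines "T \<equiv> (\<Sum>j\<in>{1..r}. real (a j) * real (m j))"
  shows "(\<Sum>j\<in>{1..r}. real (a j) * real (m j) / T * GG r a s (m(j := m j - 1))) = GG r a s m"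
proof -
  define \<sigma> where "\<sigma> = (\<Sum>f\<in>{1..<r}. real (a f) * real (s f) / real (a r))"
  define x where "x = real (m r) + \<sigma>"
  define B where "B = x gchoose m r"
  define P where "P = (\<Prod>j\<in>{1..<r}. falling_fact (real (m j)) (s j))"
  have ar: "a r \<ge> 1" using apos r1 by auto
  have sig0: "\<sigma> \<ge> 0" unfolding \<sigma>_def by (intro sum_nonneg) auto
  have xpos: "x > 0" unfolding x_def using sig0 mr by simp
  have Bpos: "B > 0" unfolding B_def x_def using sig0 by (intro gchoose_pos) auto
  have Tpos: "T > 0" unfolding T_def
  proof -
    have "real (a r) * real (m r) \<le> (\<Sum>j\<in>{1..r}. real (a j) * real (m j))"
      using r1 by (intro member_le_sum) auto
    moreover have "real (a r) * real (m r) > 0" using ar mr by simp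
    ultimately show "(\<Sum>j\<in>{1..r}. real (a j) * real (m j)) > 0" by linarith
  qed
  have GGm: "GG r a s m = P / B" unfolding GG_def P_def B_def x_def \<sigma>_def by simp
  have setr: "{1..r} = insert r {1..<r}" using r1 by auto
  define f where "f j = real (a j) * real (m j) / T * GG r a s (m(j := m j - 1))" for j
  have t1: "f j = real (a j) * (real (m j) - real (s j)) * P / (T * B)" if j: "j \<in> {1..<r}" for j
  proof -
    have jr: "j \<noteq> r" using j by auto
    have p1: "(\<Prod>i\<in>{1..<r}. falling_fact (real ((m(j := m j - 1)) i)) (s i))
        = falling_fact (real (m j - 1)) (s j) * (\<Prod>i\<in>{1..<r}-{j}. falling_fact (real (m i)) (s i))"
      using j by (subst prod.remove[of _ j]) (auto intro!: prod.cong)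
    have p2: "P = falling_fact (real (m j)) (s j) * (\<Prod>i\<in>{1..<r}-{j}. falling_fact (real (m i)) (s i))"
      unfolding P_def using j by (subst prod.remove[of _ j]) auto
    define Q where "Q = (\<Prod>i\<in>{1..<r}. falling_fact (real ((m(j := m j - 1)) i)) (s i))"
    have e1: "real (m j) * Q = (real (m j) - real (s j)) * P"
      unfolding Q_def p1 p2 mult.assoc[symmetric] ff_shift by simp
    have e2: "GG r a s (m(j := m j - 1)) = (\<Prod>i\<in>{1..<r}. falling_fact (real ((m(j := m j - 1)) i)) (s i)) / B"
      unfolding GG_def B_def x_def \<sigma>_def using jr by simp
    have "f j = real (a j) * (real (m j) * Q) / (T * B)" unfolding f_def e2 Q_def by simp
    then show ?thesis unfolding e1 by simp
  qed
  have t2: "f r = real (a r) * x * P / (T * B)"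
  proof -
    define B' where "B' = (real (m r - 1) + \<sigma>) gchoose (m r - 1)"
    have B'pos: "B' > 0" unfolding B'_def using sig0 by (intro gchoose_pos) auto
    have "B = x / real (m r) * ((x - 1) gchoose (m r - 1))"
      unfolding B_def using mr by (intro gbinomial_absorption') auto
    also have "x - 1 = real (m r - 1) + \<sigma>" unfolding x_def using mr by (simp add: of_nat_diff)
    finally have BB: "B = x / real (m r) * B'" unfolding B'_def .
    have "GG r a s (m(r := m r - 1)) = P / B'"
      unfolding GG_def P_def B'_def \<sigma>_def by (auto intro!: prod.cong arg_cong2[where f="(/)"])
    then show ?thesis unfolding f_def BB using mr B'pos Tpos xpos by (simp add: field_simps)
  qed
  have "(\<Sum>j\<in>{1..r}. f j) = f r + (\<Sum>j\<in>{1..<r}. f j)" unfolding setr by simp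
  also have "\<dots> = P / (T * B) * (real (a r) * x + (\<Sum>j\<in>{1..<r}. real (a j) * (real (m j) - real (s j))))"
  proof -
    have "(\<Sum>j\<in>{1..<r}. f j) = (\<Sum>j\<in>{1..<r}. P / (T * B) * (real (a j) * (real (m j) - real (s j))))"
      using t1 by (intro sum.cong) auto
    also have "\<dots> = P / (T * B) * (\<Sum>j\<in>{1..<r}. real (a j) * (real (m j) - real (s j)))"
      by (simp add: sum_distrib_left)
    finally show ?thesis using t2 by (simp add: algebra_simps)
  qed
  also have "real (a r) * x + (\<Sum>j\<in>{1..<r}. real (a j) * (real (m j) - real (s j))) = T"
  proof -
    have "real (a r) * \<sigma> = (\<Sum>f\<in>{1..<r}. real (a f) * real (s f))"
      unfolding \<sigma>_def sum_distrib_left using ar by (intro sum.cong) auto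
    moreover have "T = real (a r) * real (m r) + (\<Sum>j\<in>{1..<r}. real (a j) * real (m j))"
      unfolding T_def setr by simp
    ultimately show ?thesis unfolding x_def by (simp add: algebra_simps sum_subtractf)
  qed
  finally show ?thesis unfolding f_def GGm using Tpos Bpos by simp
qed

lemma moments:
  fixes r k :: nat and a c m s :: "nat \<Rightarrow> nat"
  assumes r1: "r \<ge> 1" and apos: "\<forall>j\<in>{1..r}. a j \<ge> 1"
  shows "\<forall>j\<in>{1..r}. c j = a j * m j \<Longrightarrow> (\<Sum>j\<in>{1..r}. m j) \<le> k
    \<Longrightarrow> measure_pmf.expectation (urn_run k r a c) (PP r a s) = GG r a s m"
proof (induction k arbitrary: c m)
  case 0
  have "m r \<le> (\<Sum>j\<in>{1..r}. m j)" using r1 by (intro member_le_sum) auto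
  then have "m r = 0" using 0 by simp
  then show ?case unfolding PP_def GG_def using stopped_val[OF apos 0(1)] by simp
next
  case (Suc k)
  show ?case
  proof (cases "urn_stopped r c")
    case True
    have "m r = 0 \<or> (\<forall>j\<in>{1..<r}. m j = 0)"
    proof -
      have "\<forall>j\<in>{1..r}. (c j = 0) = (m j = 0)" using Suc.prems(1) apos by fastforce
      then show ?thesis using True r1 unfolding urn_stopped_def by auto
    qed
    then show ?thesis unfolding PP_def GG_def using stopped_val[OF apos Suc.prems(1)] True by simp
  next
    case False
    define M where "M = urn_balls r c"
    have ne: "M \<noteq> {#}" unfolding M_def using urn_balls_ne[of r c, OF r1 not_stopped_pos[OF False]] .
    have cr: "c r > 0" using not_stopped_pos[OF False] .
    have mr: "m r \<ge> 1" using cr Suc.prems(1) r1 by (cases "m r") auto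
    define T where "T = (\<Sum>j\<in>{1..r}. real (a j) * real (m j))"
    have sizeM: "real (size M) = T" unfolding M_def size_urn_balls T_def
      using Suc.prems(1) by (simp add: of_nat_sum)
    have "measure_pmf.expectation (urn_run (Suc k) r a c) (PP r a s)
       = measure_pmf.expectation (bind_pmf (pmf_of_multiset M) (\<lambda>j. urn_run k r a (c(j := c j - a j)))) (PP r a s)"
      using False by (simp add: M_def)
    also have "\<dots> = (\<Sum>j\<in>{1..r}. pmf (pmf_of_multiset M) j *\<^sub>R measure_pmf.expectation (urn_run k r a (c(j := c j - a j))) (PP r a s))"
      by (rule pmf_expectation_bind) (use ne set_urn_balls[of r c] urn_run_finite[OF r1] in \<open>auto simp: M_def\<close>)
    also have "\<dots> = (\<Sum>j\<in>{1..r}. real (a j) * real (m j) / T * GG r a s (m(j := m j - 1)))"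
    proof (intro sum.cong refl)
      fix j assume j: "j \<in> {1..r}"
      have pj: "pmf (pmf_of_multiset M) j = real (a j) * real (m j) / T"
        using ne j Suc.prems(1) by (simp add: sizeM[symmetric] M_def count_urn_balls)
      show "pmf (pmf_of_multiset M) j *\<^sub>R measure_pmf.expectation (urn_run k r a (c(j := c j - a j))) (PP r a s)
          = real (a j) * real (m j) / T * GG r a s (m(j := m j - 1))"
      proof (cases "m j = 0")
        case True then show ?thesis unfolding pj by simp
      next
        case False
        have cm': "\<forall>i\<in>{1..r}. (c(j := c j - a j)) i = a i * (m(j := m j - 1)) i"
          using Suc.prems(1) j by (auto simp: diff_mult_distrib2)
        have "(\<Sum>i\<in>{1..r}. (m(j := m j - 1)) i) = (\<Sum>i\<in>{1..r}. m i) - 1"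
        proof -
          have "(\<Sum>i\<in>{1..r}. (m(j := m j - 1)) i) + 1 = (\<Sum>i\<in>{1..r}. m i)"
          proof -
            have "(\<Sum>i\<in>{1..r}. (m(j := m j - 1)) i) = (m j - 1) + (\<Sum>i\<in>{1..r}-{j}. (m(j := m j - 1)) i)"
              using j by (subst sum.remove[of "{1..r}" j]) auto
            also have "(\<Sum>i\<in>{1..r}-{j}. (m(j := m j - 1)) i) = (\<Sum>i\<in>{1..r}-{j}. m i)"
              by (intro sum.cong) auto
            also have "(\<Sum>i\<in>{1..r}. m i) = m j + (\<Sum>i\<in>{1..r}-{j}. m i)"
              using j by (subst sum.remove[of "{1..r}" j]) auto
            ultimately show ?thesis using False by simp
          qed
          then show ?thesis by simp
        qed
        then have "(\<Sum>i\<in>{1..r}. (m(j := m j - 1)) i) \<le> k" using Suc.prems(2) by simp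
        note IH = Suc.IH[OF cm' this]
        show ?thesis unfolding pj IH by simp
      qed
    qed
    also have "\<dots> = GG r a s m" unfolding T_def by (rule alg[of r a m s, OF r1 apos mr])
    finally show ?thesis .
  qed
qed

theorem corollary4:
  fixes r :: nat and a n :: "nat \<Rightarrow> nat"
  assumes "r \<ge> 2"
    and "\<forall>j\<in>{1..r}. a j \<ge> 1"
    and "\<forall>j\<in>{1..r}. n j \<ge> 1"
  shows "(\<forall>k :: nat \<Rightarrow> nat. (\<forall>j\<in>{1..<r}. k j \<le> n j) \<longrightarrow>
            measure_pmf.prob (urn_final r a n) {c. \<forall>j\<in>{1..<r}. c j = a j * k j}
            = (\<Sum>l\<in>PiE {1..<r} (\<lambda>j. {k j..n j}).
                 (\<Prod>j\<in>{1..<r}. real (n j choose l j) * real (l j choose k j)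
                                  * (-1) ^ (l j - k j))
                 / ((real (n r) + (\<Sum>f\<in>{1..<r}. real (a f) * real (l f) / real (a r)))
                      gchoose n r)))
       \<and> (\<forall>s :: nat \<Rightarrow> nat.
            measure_pmf.expectation (urn_final r a n)
              (\<lambda>c. \<Prod>j\<in>{1..<r}. falling_fact (real (c j) / real (a j)) (s j))
            = (\<Prod>j\<in>{1..<r}. falling_fact (real (n j)) (s j))
              / ((real (n r) + (\<Sum>f\<in>{1..<r}. real (a f) * real (s f) / real (a r)))
                   gchoose n r))"
proof -
  define K where "K = (\<Sum>j\<in>{1..r}. a j * n j)"
  define c0 where "c0 = (\<lambda>j. a j * n j)"
  have r1: "r \<ge> 1" using assms(1) by simp
  have apos: "\<forall>j\<in>{1..r}. a j \<ge> 1" using assms(2) .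
  have Q: "urn_final r a n = urn_run K r a c0" unfolding urn_final_def K_def c0_def ..
  have cm: "\<forall>j\<in>{1..r}. c0 j = a j * n j" unfolding c0_def by simp
  have nK: "(\<Sum>j\<in>{1..r}. n j) \<le> K" unfolding K_def
    using apos by (intro sum_mono) simp
  have mom: "measure_pmf.expectation (urn_final r a n) (PP r a s) = GG r a s n" for s
    unfolding Q by (rule moments[OF r1 apos cm nK])
  have fin: "finite (set_pmf (urn_final r a n))" unfolding Q by (rule urn_run_finite[OF r1])
  have PPeq: "PP r a s = (\<lambda>c. \<Prod>j\<in>{1..<r}. falling_fact (real (c j) / real (a j)) (s j))" for s
    by (rule ext) (simp add: PP_def)
  show ?thesis
  proof
    show "\<forall>s. measure_pmf.expectation (urn_final r a n)
              (\<lambda>c. \<Prod>j\<in>{1..<r}. falling_fact (real (c j) / real (a j)) (s j))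
            = (\<Prod>j\<in>{1..<r}. falling_fact (real (n j)) (s j))
              / ((real (n r) + (\<Sum>f\<in>{1..<r}. real (a f) * real (s f) / real (a r)))
                   gchoose n r)"
      using mom unfolding PPeq GG_def by simp
  next
    show "\<forall>k :: nat \<Rightarrow> nat. (\<forall>j\<in>{1..<r}. k j \<le> n j) \<longrightarrow>
            measure_pmf.prob (urn_final r a n) {c. \<forall>j\<in>{1..<r}. c j = a j * k j}
            = (\<Sum>l\<in>PiE {1..<r} (\<lambda>j. {k j..n j}).
                 (\<Prod>j\<in>{1..<r}. real (n j choose l j) * real (l j choose k j)
                                  * (-1) ^ (l j - k j))
                 / ((real (n r) + (\<Sum>f\<in>{1..<r}. real (a f) * real (l f) / real (a r)))
                      gchoose n r))"
    proof (intro allI impI)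
      fix k :: "nat \<Rightarrow> nat"
      assume kn: "\<forall>j\<in>{1..<r}. k j \<le> n j"
      define A where "A = {c :: nat \<Rightarrow> nat. \<forall>j\<in>{1..<r}. c j = a j * k j}"
      define L where "L = PiE {1..<r} (\<lambda>j. {k j..n j})"
      define coef where "coef l = (\<Prod>j\<in>{1..<r}. (-1) ^ (l j - k j) * real (l j choose k j) / fact (l j))" for l :: "nat \<Rightarrow> nat"
      define F where "F c = (\<Sum>l\<in>L. coef l * PP r a l c)" for c
      have finL: "finite L" unfolding L_def by (intro finite_PiE) auto
      have "measure_pmf.prob (urn_final r a n) A = measure_pmf.expectation (urn_final r a n) (indicator A)"
        by simp
      also have "\<dots> = measure_pmf.expectation (urn_final r a n) F"
      proof (intro integral_cong_AE)
        show "AE c in measure_pmf (urn_final r a n). indicator A c = F c"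
        proof (rule AE_pmfI)
          fix c assume "c \<in> set_pmf (urn_final r a n)"
          then have "\<forall>j\<in>{1..r}. \<exists>y\<le>n j. c j = a j * y"
            unfolding Q by (intro urn_run_support[OF cm _ r1])
          then obtain y where y: "\<forall>j\<in>{1..r}. y j \<le> n j \<and> c j = a j * y j" by metis
          have yj: "y j \<le> n j" "c j = a j * y j" "a j \<ge> 1" "k j \<le> n j" if "j \<in> {1..<r}" for j
            using y apos kn that by auto
          have "indicator A c = (\<Prod>j\<in>{1..<r}. (if y j = k j then 1 else 0 :: real))"
          proof -
            have iff: "c \<in> A \<longleftrightarrow> (\<forall>j\<in>{1..<r}. y j = k j)"
            proof -
              have "(c j = a j * k j) \<longleftrightarrow> y j = k j" if "j \<in> {1..<r}" for j
                using yj[OF that] by simp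
              then show ?thesis unfolding A_def by auto
            qed
            show ?thesis
            proof (cases "\<forall>j\<in>{1..<r}. y j = k j")
              case True
              then show ?thesis using iff by (simp add: indicator_def)
            next
              case False
              then obtain j where j: "j \<in> {1..<r}" "y j \<noteq> k j" by auto
              have "(\<Prod>j\<in>{1..<r}. (if y j = k j then 1 else 0 :: real)) = 0"
                using j by (intro prod_zero) auto
              then show ?thesis using iff False by (simp add: indicator_def)
            qed
          qed
          also have "\<dots> = (\<Prod>j\<in>{1..<r}. \<Sum>l\<in>{k j..n j}. (-1) ^ (l - k j) * real (l choose k j) * real (y j choose l))"
            using yj by (intro prod.cong refl alt_sum) auto
          also have "\<dots> = (\<Sum>l\<in>L. \<Prod>j\<in>{1..<r}. (-1) ^ (l j - k j) * real (l j choose k j) * real (y j choose l j))"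
            unfolding L_def by (rule prod_sum_PiE) auto
          also have "\<dots> = F c"
            unfolding F_def
          proof (intro sum.cong refl)
            fix l assume "l \<in> L"
            have "(\<Prod>j\<in>{1..<r}. (-1) ^ (l j - k j) * real (l j choose k j) * real (y j choose l j))
               = (\<Prod>j\<in>{1..<r}. ((-1) ^ (l j - k j) * real (l j choose k j) / fact (l j))
                    * falling_fact (real (c j) / real (a j)) (l j))"
            proof (intro prod.cong refl)
              fix j assume j: "j \<in> {1..<r}"
              have "real (c j) / real (a j) = real (y j)" using yj(2,3)[OF j] by simp
              then show "(-1) ^ (l j - k j) * real (l j choose k j) * real (y j choose l j)
                = ((-1) ^ (l j - k j) * real (l j choose k j) / fact (l j)) * falling_fact (real (c j) / real (a j)) (l j)"
                by (simp add: choose_ff)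
            qed
            also have "\<dots> = coef l * PP r a l c"
              unfolding coef_def PP_def by (rule prod.distrib)
            finally show "(\<Prod>j\<in>{1..<r}. (-1) ^ (l j - k j) * real (l j choose k j) * real (y j choose l j)) = coef l * PP r a l c" .
          qed
          finally show "indicator A c = F c" .
        qed
      qed simp_all
      also have "\<dots> = (\<Sum>l\<in>L. coef l * measure_pmf.expectation (urn_final r a n) (PP r a l))"
        unfolding F_def using fin
        by (simp add: integral_sum integrable_measure_pmf_finite)
      also have "\<dots> = (\<Sum>l\<in>L. coef l * GG r a l n)" by (simp add: mom)
      also have "\<dots> = (\<Sum>l\<in>L. (\<Prod>j\<in>{1..<r}. real (n j choose l j) * real (l j choose k j) * (-1) ^ (l j - k j))
                 / ((real (n r) + (\<Sum>f\<in>{1..<r}. real (a f) * real (l f) / real (a r))) gchoose n r))"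
      proof (intro sum.cong refl)
        fix l assume "l \<in> L"
        have "coef l * (\<Prod>j\<in>{1..<r}. falling_fact (real (n j)) (l j))
            = (\<Prod>j\<in>{1..<r}. (-1) ^ (l j - k j) * real (l j choose k j) / fact (l j) * falling_fact (real (n j)) (l j))"
          unfolding coef_def by (rule prod.distrib[symmetric])
        also have "\<dots> = (\<Prod>j\<in>{1..<r}. real (n j choose l j) * real (l j choose k j) * (-1) ^ (l j - k j))"
        proof (intro prod.cong refl)
          fix j
          show "(-1) ^ (l j - k j) * real (l j choose k j) / fact (l j) * falling_fact (real (n j)) (l j)
              = real (n j choose l j) * real (l j choose k j) * (-1) ^ (l j - k j)"
            unfolding choose_ff[of "n j" "l j"] by (simp add: field_simps)
        qed
        finally have eq: "coef l * (\<Prod>j\<in>{1..<r}. falling_fact (real (n j)) (l j)) = (\<Prod>j\<in>{1..<r}. real (n j choose l j) * real (l j choose k j) * (-1) ^ (l j - k j))" .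
        show "coef l * GG r a l n = (\<Prod>j\<in>{1..<r}. real (n j choose l j) * real (l j choose k j) * (-1) ^ (l j - k j))
                 / ((real (n r) + (\<Sum>f\<in>{1..<r}. real (a f) * real (l f) / real (a r))) gchoose n r)"
          unfolding GG_def by (simp only: times_divide_eq_right eq)
      qed
      finally show "measure_pmf.prob (urn_final r a n) {c. \<forall>j\<in>{1..<r}. c j = a j * k j}
            = (\<Sum>l\<in>PiE {1..<r} (\<lambda>j. {k j..n j}).
                 (\<Prod>j\<in>{1..<r}. real (n j choose l j) * real (l j choose k j)
                                  * (-1) ^ (l j - k j))
                 / ((real (n r) + (\<Sum>f\<in>{1..<r}. real (a f) * real (l f) / real (a r)))
                      gchoose n r))" unfolding A_def L_def .
    qed
  qed
qed

end
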